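(* Let $\Re$ be a commutative Krasner hyperring with identity $1\ne0$, let $\phi:L(\Re)\to L(\Re)\cup\{\emptyset\}$ be a function, and let $T$ be a proper hyperideal of $\Re$ with $\phi(T)\subseteq T$ such that $T$ is $\phi$-prime but not prime. Then $T\circ\sqrt{\phi(T)}\subseteq\phi(T)$, i.e. $t\circ a\in\phi(T)$ for all $t\in T$ and $a\in\sqrt{\phi(T)}$.
   Context: Krasner hyperring: $(\Re,\oplus)$ canonical hypergroup, $(\Re,\circ)$ commutative semigroup with identity $1\ne0$, $0$ absorbing, distributive. Hyperideals and $L(\Re)$ as usual. $\sqrt{I}=\{x: x^n\in I \text{ for some } n\ge1\}$ ($\sqrt{\emptyset}=\emptyset$). $T$ is prime if $a\circ b\in T\Rightarrow a\in T$ or $b\in T$; $T$ is $\phi$-prime if $a\circ b\in T$, $a\circ b\notin\phi(T)$ imply $a\in T$ or $b\in T$. *)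

theory Defs
  imports Main
begin

definition hsum :: "('a \<Rightarrow> 'a \<Rightarrow> 'a set) \<Rightarrow> 'a set \<Rightarrow> 'a set \<Rightarrow> 'a set" where
  "hsum add A B = (\<Union>a\<in>A. \<Union>b\<in>B. add a b)"

definition canonical_hypergroup :: "'a set \<Rightarrow> ('a \<Rightarrow> 'a \<Rightarrow> 'a set) \<Rightarrow> 'a \<Rightarrow> bool" where
  "canonical_hypergroup R add z \<longleftrightarrow>
     z \<in> R \<and>
     (\<forall>x\<in>R. \<forall>y\<in>R. add x y \<noteq> {} \<and> add x y \<subseteq> R) \<and>
     (\<forall>x\<in>R. \<forall>y\<in>R. \<forall>w\<in>R. hsum add (add x y) {w} = hsum add {x} (add y w)) \<and>
     (\<forall>x\<in>R. \<forall>y\<in>R. add x y = add y x) \<and>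
     (\<forall>x\<in>R. add z x = {x}) \<and>
     (\<forall>x\<in>R. \<exists>!x'\<in>R. z \<in> add x x') \<and>
     (\<forall>x\<in>R. \<forall>y\<in>R. \<forall>w\<in>R. \<forall>y'\<in>R. w \<in> add x y \<longrightarrow> z \<in> add y y' \<longrightarrow> x \<in> add w y')"

definition krasner_hyperring ::
  "'a set \<Rightarrow> ('a \<Rightarrow> 'a \<Rightarrow> 'a set) \<Rightarrow> ('a \<Rightarrow> 'a \<Rightarrow> 'a) \<Rightarrow> 'a \<Rightarrow> 'a \<Rightarrow> bool" where
  "krasner_hyperring R add mult z one \<longleftrightarrow>
     canonical_hypergroup R add z \<and>
     one \<in> R \<and> one \<noteq> z \<and>
     (\<forall>x\<in>R. \<forall>y\<in>R. mult x y \<in> R) \<and>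
     (\<forall>x\<in>R. \<forall>y\<in>R. \<forall>w\<in>R. mult (mult x y) w = mult x (mult y w)) \<and>
     (\<forall>x\<in>R. \<forall>y\<in>R. mult x y = mult y x) \<and>
     (\<forall>x\<in>R. mult one x = x) \<and>
     (\<forall>x\<in>R. mult z x = z) \<and>
     (\<forall>x\<in>R. \<forall>y\<in>R. \<forall>w\<in>R. mult w ` (add x y) = add (mult w x) (mult w y))"

text \<open>Hyperideals: nonempty subsets closed under subtraction (a + (-b) \<subseteq> I)
  and absorbing under multiplication. Here -b is the unique opposite.\<close>
definition hyperideal ::
  "'a set \<Rightarrow> ('a \<Rightarrow> 'a \<Rightarrow> 'a set) \<Rightarrow> ('a \<Rightarrow> 'a \<Rightarrow> 'a) \<Rightarrow> 'a \<Rightarrow> 'a set \<Rightarrow> bool" where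
  "hyperideal R add mult z I \<longleftrightarrow>
     I \<noteq> {} \<and> I \<subseteq> R \<and>
     (\<forall>a\<in>I. \<forall>b\<in>I. \<forall>b'\<in>R. z \<in> add b b' \<longrightarrow> add a b' \<subseteq> I) \<and>
     (\<forall>r\<in>R. \<forall>a\<in>I. mult r a \<in> I)"

definition hyperideals ::
  "'a set \<Rightarrow> ('a \<Rightarrow> 'a \<Rightarrow> 'a set) \<Rightarrow> ('a \<Rightarrow> 'a \<Rightarrow> 'a) \<Rightarrow> 'a \<Rightarrow> 'a set set" where
  "hyperideals R add mult z = {I. hyperideal R add mult z I}"

fun hpow :: "('a \<Rightarrow> 'a \<Rightarrow> 'a) \<Rightarrow> 'a \<Rightarrow> 'a \<Rightarrow> nat \<Rightarrow> 'a" where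
  "hpow mult one x 0 = one"
| "hpow mult one x (Suc n) = mult x (hpow mult one x n)"

definition hradical :: "'a set \<Rightarrow> ('a \<Rightarrow> 'a \<Rightarrow> 'a) \<Rightarrow> 'a \<Rightarrow> 'a set \<Rightarrow> 'a set" where
  "hradical R mult one I = {x\<in>R. \<exists>n\<ge>1. hpow mult one x n \<in> I}"

definition hprime :: "'a set \<Rightarrow> ('a \<Rightarrow> 'a \<Rightarrow> 'a) \<Rightarrow> 'a set \<Rightarrow> bool" where
  "hprime R mult T \<longleftrightarrow> (\<forall>a\<in>R. \<forall>b\<in>R. mult a b \<in> T \<longrightarrow> a \<in> T \<or> b \<in> T)"

definition phi_prime :: "'a set \<Rightarrow> ('a \<Rightarrow> 'a \<Rightarrow> 'a) \<Rightarrow> ('a set \<Rightarrow> 'a set) \<Rightarrow> 'a set \<Rightarrow> bool" where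
  "phi_prime R mult \<phi> T \<longleftrightarrow>
     (\<forall>a\<in>R. \<forall>b\<in>R. mult a b \<in> T \<longrightarrow> mult a b \<notin> \<phi> T \<longrightarrow> a \<in> T \<or> b \<in> T)"

end

theory Submission
  imports Defs
begin

lemma KD:
  assumes "krasner_hyperring R add mult z one"
  shows "z \<in> R" "\<And>x y. x\<in>R \<Longrightarrow> y\<in>R \<Longrightarrow> add x y \<noteq> {}"
    "\<And>x y. x\<in>R \<Longrightarrow> y\<in>R \<Longrightarrow> add x y \<subseteq> R"
    "\<And>x y. x\<in>R \<Longrightarrow> y\<in>R \<Longrightarrow> add x y = add y x"
    "\<And>x. x\<in>R \<Longrightarrow> add z x = {x}"
    "\<And>x. x\<in>R \<Longrightarrow> \<exists>x'\<in>R. z \<in> add x x'"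
    "\<And>x y w y'. x\<in>R \<Longrightarrow> y\<in>R \<Longrightarrow> w\<in>R \<Longrightarrow> y'\<in>R \<Longrightarrow> w \<in> add x y \<Longrightarrow> z \<in> add y y' \<Longrightarrow> x \<in> add w y'"
    "one \<in> R" "one \<noteq> z"
    "\<And>x y. x\<in>R \<Longrightarrow> y\<in>R \<Longrightarrow> mult x y \<in> R"
    "\<And>x y. x\<in>R \<Longrightarrow> y\<in>R \<Longrightarrow> mult x y = mult y x"
    "\<And>x. x\<in>R \<Longrightarrow> mult one x = x"
    "\<And>x. x\<in>R \<Longrightarrow> mult z x = z"
    "\<And>x y w. x\<in>R \<Longrightarrow> y\<in>R \<Longrightarrow> w\<in>R \<Longrightarrow> mult w ` (add x y) = add (mult w x) (mult w y)"
proof -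
  have A0: "(canonical_hypergroup R add z) \<and> (one \<in> R) \<and> (one \<noteq> z) \<and> (\<forall>x\<in>R. \<forall>y\<in>R. mult x y \<in> R) \<and> (\<forall>x\<in>R. \<forall>y\<in>R. \<forall>w\<in>R. mult (mult x y) w = mult x (mult y w)) \<and> (\<forall>x\<in>R. \<forall>y\<in>R. mult x y = mult y x) \<and> (\<forall>x\<in>R. mult one x = x) \<and> (\<forall>x\<in>R. mult z x = z) \<and> (\<forall>x\<in>R. \<forall>y\<in>R. \<forall>w\<in>R. mult w ` (add x y) = add (mult w x) (mult w y))"
    using assms unfolding krasner_hyperring_def .
  note A1 = A0[THEN conjunct1]
  note A2 = A0[THEN conjunct2, THEN conjunct1]
  note A3 = A0[THEN conjunct2, THEN conjunct2, THEN conjunct1]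
  note A4 = A0[THEN conjunct2, THEN conjunct2, THEN conjunct2, THEN conjunct1]
  note A5 = A0[THEN conjunct2, THEN conjunct2, THEN conjunct2, THEN conjunct2, THEN conjunct1]
  note A6 = A0[THEN conjunct2, THEN conjunct2, THEN conjunct2, THEN conjunct2, THEN conjunct2, THEN conjunct1]
  note A7 = A0[THEN conjunct2, THEN conjunct2, THEN conjunct2, THEN conjunct2, THEN conjunct2, THEN conjunct2, THEN conjunct1]
  note A8 = A0[THEN conjunct2, THEN conjunct2, THEN conjunct2, THEN conjunct2, THEN conjunct2, THEN conjunct2, THEN conjunct2, THEN conjunct1]
  note A9 = A0[THEN conjunct2, THEN conjunct2, THEN conjunct2, THEN conjunct2, THEN conjunct2, THEN conjunct2, THEN conjunct2, THEN conjunct2]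
  have B0: "(z \<in> R) \<and> (\<forall>x\<in>R. \<forall>y\<in>R. add x y \<noteq> {} \<and> add x y \<subseteq> R) \<and> (\<forall>x\<in>R. \<forall>y\<in>R. \<forall>w\<in>R. hsum add (add x y) {w} = hsum add {x} (add y w)) \<and> (\<forall>x\<in>R. \<forall>y\<in>R. add x y = add y x) \<and> (\<forall>x\<in>R. add z x = {x}) \<and> (\<forall>x\<in>R. \<exists>!x'\<in>R. z \<in> add x x') \<and> (\<forall>x\<in>R. \<forall>y\<in>R. \<forall>w\<in>R. \<forall>y'\<in>R. w \<in> add x y \<longrightarrow> z \<in> add y y' \<longrightarrow> x \<in> add w y')"
    using A1 unfolding canonical_hypergroup_def .
  note B1x = B0[THEN conjunct1]
  note B2x = B0[THEN conjunct2, THEN conjunct1]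
  note B3x = B0[THEN conjunct2, THEN conjunct2, THEN conjunct1]
  note B4x = B0[THEN conjunct2, THEN conjunct2, THEN conjunct2, THEN conjunct1]
  note B5x = B0[THEN conjunct2, THEN conjunct2, THEN conjunct2, THEN conjunct2, THEN conjunct1]
  note B6x = B0[THEN conjunct2, THEN conjunct2, THEN conjunct2, THEN conjunct2, THEN conjunct2, THEN conjunct1]
  note B7x = B0[THEN conjunct2, THEN conjunct2, THEN conjunct2, THEN conjunct2, THEN conjunct2, THEN conjunct2]
  show "z \<in> R" by (rule B1x)
  show "\<And>x y. x\<in>R \<Longrightarrow> y\<in>R \<Longrightarrow> add x y \<noteq> {}" using B2x by blast
  show "\<And>x y. x\<in>R \<Longrightarrow> y\<in>R \<Longrightarrow> add x y \<subseteq> R" using B2x by blast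
  show "\<And>x y. x\<in>R \<Longrightarrow> y\<in>R \<Longrightarrow> add x y = add y x" by (rule B4x[rule_format])
  show "\<And>x. x\<in>R \<Longrightarrow> add z x = {x}" by (rule B5x[rule_format])
  show "\<And>x. x\<in>R \<Longrightarrow> \<exists>x'\<in>R. z \<in> add x x'" using B6x by blast
  show "\<And>x y w y'. x\<in>R \<Longrightarrow> y\<in>R \<Longrightarrow> w\<in>R \<Longrightarrow> y'\<in>R \<Longrightarrow> w \<in> add x y \<Longrightarrow> z \<in> add y y' \<Longrightarrow> x \<in> add w y'"
    by (rule B7x[rule_format])
  show "one \<in> R" "one \<noteq> z" by (rule A2, rule A3)
  show "\<And>x y. x\<in>R \<Longrightarrow> y\<in>R \<Longrightarrow> mult x y \<in> R" by (rule A4[rule_format])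
  show "\<And>x y. x\<in>R \<Longrightarrow> y\<in>R \<Longrightarrow> mult x y = mult y x" by (rule A6[rule_format])
  show "\<And>x. x\<in>R \<Longrightarrow> mult one x = x" by (rule A7[rule_format])
  show "\<And>x. x\<in>R \<Longrightarrow> mult z x = z" by (rule A8[rule_format])
  show "\<And>x y w. x\<in>R \<Longrightarrow> y\<in>R \<Longrightarrow> w\<in>R \<Longrightarrow> mult w ` (add x y) = add (mult w x) (mult w y)"
    by (rule A9[rule_format])
qed

lemma HD:
  assumes "hyperideal R add mult z I"
  shows "I \<noteq> {}" "I \<subseteq> R"
    "\<And>a b b'. a\<in>I \<Longrightarrow> b\<in>I \<Longrightarrow> b'\<in>R \<Longrightarrow> z \<in> add b b' \<Longrightarrow> add a b' \<subseteq> I"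
    "\<And>r a. r\<in>R \<Longrightarrow> a\<in>I \<Longrightarrow> mult r a \<in> I"
  using assms unfolding hyperideal_def by blast+

lemma hpow_in:
  assumes "krasner_hyperring R add mult z one" "x \<in> R"
  shows "hpow mult one x n \<in> R"
  using assms by (induction n) (auto simp: KD)

lemma cancel_lem:
  assumes K: "krasner_hyperring R add mult z one" and J: "hyperideal R add mult z J"
    and "w \<in> add x y" "w \<in> J" "y \<in> J" "x \<in> R"
  shows "x \<in> J"
proof -
  have y: "y \<in> R" using HD(2)[OF J] assms(5) by blast
  obtain y' where y': "y' \<in> R" "z \<in> add y y'" using KD(6)[OF K y] by blast
  have w: "w \<in> R" using HD(2)[OF J] assms(4) by blast
  have "x \<in> add w y'" using KD(7)[OF K assms(6) y w y'(1) assms(3) y'(2)] .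
  moreover have "add w y' \<subseteq> J" using HD(3)[OF J assms(4,5) y'] .
  ultimately show ?thesis by blast
qed

lemma zero_in:
  assumes K: "krasner_hyperring R add mult z one" and J: "hyperideal R add mult z J"
  shows "z \<in> J"
proof -
  obtain a where a: "a \<in> J" using HD(1)[OF J] by blast
  have aR: "a \<in> R" using a HD(2)[OF J] by blast
  have "mult z a \<in> J" using HD(4)[OF J KD(1)[OF K] a] .
  moreover have "mult z a = z" using KD(13)[OF K aR] .
  ultimately show ?thesis by simp
qed

lemma add_closed:
  assumes K: "krasner_hyperring R add mult z one" and J: "hyperideal R add mult z J"
    and "u \<in> J" "v \<in> J"
  shows "add u v \<subseteq> J"
proof -
  have v: "v \<in> R" using HD(2)[OF J] assms(4) by blast
  obtain v' where v': "v' \<in> R" "z \<in> add v v'" using KD(6)[OF K v] by blast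
  have zJ: "z \<in> J" by (rule zero_in[OF K J])
  have "add z v' \<subseteq> J" using HD(3)[OF J zJ assms(4) v'] .
  moreover have "add z v' = {v'}" using KD(5)[OF K v'(1)] .
  ultimately have v'J: "v' \<in> J" by simp
  have "z \<in> add v' v" using v'(2) unfolding KD(4)[OF K v v'(1)] .
  then show ?thesis using HD(3)[OF J assms(3) v'J v] by blast
qed

lemma key:
  assumes K: "krasner_hyperring R add mult z one"
    and T: "hyperideal R add mult z T" and J: "hyperideal R add mult z J"
    and P: "\<forall>a\<in>R. \<forall>b\<in>R. mult a b \<in> T \<longrightarrow> mult a b \<notin> J \<longrightarrow> a \<in> T \<or> b \<in> T"
    and JT: "J \<subseteq> T"
    and a: "a \<in> R" "a \<notin> T" and b: "b \<in> R" "b \<notin> T" and ab: "mult a b \<in> J"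
    and i: "i \<in> T"
  shows "mult a i \<in> J"
proof (rule ccontr)
  assume nai: "mult a i \<notin> J"
  have iR: "i \<in> R" using HD(2)[OF T] i by (rule subsetD)
  obtain x where x: "x \<in> add b i" using KD(2)[OF K b(1) iR] by (meson ex_in_conv)
  have xR: "x \<in> R" using KD(3)[OF K b(1) iR] x by (rule subsetD)
  have xT: "x \<notin> T" using b(2) cancel_lem[OF K T x _ i b(1)] by (rule contrapos_nn)
  have "mult a x \<in> mult a ` add b i" using x by (rule imageI)
  then have ax: "mult a x \<in> add (mult a b) (mult a i)" unfolding KD(14)[OF K b(1) iR a(1)] .
  have ax2: "mult a x \<in> add (mult a i) (mult a b)"
    using ax unfolding KD(4)[OF K KD(10)[OF K a(1) b(1)] KD(10)[OF K a(1) iR]] .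
  have "mult a x \<notin> J"
  proof
    assume "mult a x \<in> J"
    then have "mult a i \<in> J" by (rule cancel_lem[OF K J ax2 _ ab KD(10)[OF K a(1) iR]])
    then show False using nai by (rule notE[rotated])
  qed
  moreover have "mult a x \<in> T"
  proof -
    have "mult a b \<in> T" using JT ab by (rule subsetD)
    then have "add (mult a b) (mult a i) \<subseteq> T" using add_closed[OF K T] HD(4)[OF T a(1) i] by blast
    then show ?thesis using ax by (rule subsetD)
  qed
  ultimately have "a \<in> T \<or> x \<in> T" using P a(1) xR by simp
  then show False using a(2) xT by simp
qed

lemma sq:
  assumes K: "krasner_hyperring R add mult z one"
    and T: "hyperideal R add mult z T" and J: "hyperideal R add mult z J"
    and P: "\<forall>a\<in>R. \<forall>b\<in>R. mult a b \<in> T \<longrightarrow> mult a b \<notin> J \<longrightarrow> a \<in> T \<or> b \<in> T"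
    and JT: "J \<subseteq> T"
    and a: "a \<in> R" "a \<notin> T" and b: "b \<in> R" "b \<notin> T" and ab: "mult a b \<in> J"
    and i: "i \<in> T" and j: "j \<in> T"
  shows "mult i j \<in> J"
proof (rule ccontr)
  assume nij: "mult i j \<notin> J"
  have iR: "i \<in> R" using HD(2)[OF T] i by (rule subsetD)
  have jR: "j \<in> R" using j HD(2)[OF T] by blast
  have ba: "mult b a \<in> J" using ab unfolding KD(11)[OF K a(1) b(1)] .
  have aT: "\<And>t. t \<in> T \<Longrightarrow> mult a t \<in> J" using key[OF K T J P JT a b ab] .
  have bT: "\<And>t. t \<in> T \<Longrightarrow> mult b t \<in> J" using key[OF K T J P JT b a ba] .
  obtain x where x: "x \<in> add a i" using KD(2)[OF K a(1) iR] by blast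
  have xR: "x \<in> R" using x KD(3)[OF K a(1) iR] by blast
  have xT: "x \<notin> T" using cancel_lem[OF K T x _ i a(1)] a(2) by blast
  obtain y where y: "y \<in> add b j" using KD(2)[OF K b(1) jR] by blast
  have yR: "y \<in> R" using y KD(3)[OF K b(1) jR] by blast
  have yT: "y \<notin> T" using cancel_lem[OF K T y _ j b(1)] b(2) by blast
  have "mult a y \<in> mult a ` add b j" using y by (rule imageI)
  then have ay: "mult a y \<in> add (mult a b) (mult a j)" unfolding KD(14)[OF K b(1) jR a(1)] .
  have ayJ: "mult a y \<in> J" using add_closed[OF K J ab aT[OF j]] ay by blast
  have yaJ: "mult y a \<in> J" using ayJ unfolding KD(11)[OF K a(1) yR] .
  have "mult i y \<in> mult i ` add b j" using y by (rule imageI)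
  then have iy: "mult i y \<in> add (mult i b) (mult i j)" unfolding KD(14)[OF K b(1) jR iR] .
  have ibJ: "mult i b \<in> J" using bT[OF i] unfolding KD(11)[OF K iR b(1)] .
  have iy2: "mult i y \<in> add (mult i j) (mult i b)"
    using iy unfolding KD(4)[OF K KD(10)[OF K iR b(1)] KD(10)[OF K iR jR]] .
  have iyJ: "mult i y \<notin> J"
    using cancel_lem[OF K J iy2 _ ibJ KD(10)[OF K iR jR]] nij by blast
  have yiJ: "mult y i \<notin> J" using iyJ unfolding KD(11)[OF K iR yR] .
  have "mult y x \<in> mult y ` add a i" using x by (rule imageI)
  then have yx: "mult y x \<in> add (mult y a) (mult y i)" unfolding KD(14)[OF K a(1) iR yR] .
  have yx2: "mult y x \<in> add (mult y i) (mult y a)"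
    using yx unfolding KD(4)[OF K KD(10)[OF K yR a(1)] KD(10)[OF K yR iR]] .
  have "mult y x \<notin> J"
    using cancel_lem[OF K J yx2 _ yaJ KD(10)[OF K yR iR]] yiJ by blast
  then have nxy: "mult x y \<notin> J" unfolding KD(11)[OF K xR yR] .
  have "mult y x \<in> T" using add_closed[OF K T, of "mult y a" "mult y i"] yx JT yaJ HD(4)[OF T yR i] by blast
  then have "mult x y \<in> T" unfolding KD(11)[OF K xR yR] .
  then have "x \<in> T \<or> y \<in> T" using P xR yR nxy by blast
  then show False using xT yT by blast
qed

theorem mainTheorem8:
  fixes R :: "'a set" and add :: "'a \<Rightarrow> 'a \<Rightarrow> 'a set" and mult :: "'a \<Rightarrow> 'a \<Rightarrow> 'a"
    and z one :: 'a and \<phi> :: "'a set \<Rightarrow> 'a set" and T :: "'a set"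
  assumes "krasner_hyperring R add mult z one"
    and "\<forall>I\<in>hyperideals R add mult z. \<phi> I \<in> hyperideals R add mult z \<or> \<phi> I = {}"
    and "hyperideal R add mult z T" and "T \<noteq> R"
    and "\<phi> T \<subseteq> T"
    and "phi_prime R mult \<phi> T" and "\<not> hprime R mult T"
  shows "\<forall>t\<in>T. \<forall>a\<in>hradical R mult one (\<phi> T). mult t a \<in> \<phi> T"
proof (intro ballI)
  fix t r assume t: "t \<in> T" and r: "r \<in> hradical R mult one (\<phi> T)"
  note K = assms(1) and T = assms(3) and JT = assms(5)
  have P: "\<forall>a\<in>R. \<forall>b\<in>R. mult a b \<in> T \<longrightarrow> mult a b \<notin> \<phi> T \<longrightarrow> a \<in> T \<or> b \<in> T"
    using assms(6) unfolding phi_prime_def by blast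
  obtain a b where a: "a \<in> R" "a \<notin> T" and b: "b \<in> R" "b \<notin> T" and abT: "mult a b \<in> T"
    using assms(7) unfolding hprime_def by blast
  have ab: "mult a b \<in> \<phi> T" using P a b abT by blast
  have TL: "T \<in> hyperideals R add mult z" using T unfolding hyperideals_def by simp
  have "\<phi> T \<in> hyperideals R add mult z \<or> \<phi> T = {}" using assms(2) TL by blast
  then have J: "hyperideal R add mult z (\<phi> T)"
    using ab unfolding hyperideals_def by auto
  obtain n where rR: "r \<in> R" and n: "n \<ge> 1" "hpow mult one r n \<in> \<phi> T"
    using r unfolding hradical_def by blast
  have tR: "t \<in> R" using t HD(2)[OF T] by blast
  show "mult t r \<in> \<phi> T"
  proof (cases "r \<in> T")
    case True
    then show ?thesis using sq[OF K T J P JT a b ab t] by blast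
  next
    case False
    define m where "m = (LEAST k. hpow mult one r k \<in> T)"
    have ex: "hpow mult one r n \<in> T" using n JT by blast
    have mT: "hpow mult one r m \<in> T" unfolding m_def by (rule LeastI[where P="\<lambda>k. hpow mult one r k \<in> T", OF ex])
    have lt: "\<And>k. k < m \<Longrightarrow> hpow mult one r k \<notin> T" unfolding m_def using not_less_Least by blast
    have oneT: "one \<notin> T"
    proof
      assume "one \<in> T"
      then have "\<forall>x\<in>R. mult x one \<in> T" using HD(4)[OF T] by blast
      have "R \<subseteq> T"
      proof
        fix x assume xR: "x \<in> R"
        have "mult x one = x" using KD(11)[OF K xR KD(8)[OF K]] KD(12)[OF K xR] by (rule trans)
        then show "x \<in> T" using \<open>\<forall>x\<in>R. mult x one \<in> T\<close> xR by metis
      qed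
      then show False using assms(4) HD(2)[OF T] by blast
    qed
    have "hpow mult one r 1 = mult r one" by simp
    also have "\<dots> = mult one r" by (rule KD(11)[OF K rR KD(8)[OF K]])
    also have "\<dots> = r" by (rule KD(12)[OF K rR])
    finally have r1: "hpow mult one r 1 = r" .
    have "m \<noteq> 0" using mT oneT by (cases m) auto
    moreover have "m \<noteq> 1" using mT r1 False by auto
    ultimately obtain k where mk: "m = Suc k" "k \<ge> 1" by (cases m) auto
    have kT: "hpow mult one r k \<notin> T" using lt mk by simp
    have kR: "hpow mult one r k \<in> R" using hpow_in[OF K rR] .
    have mJ: "mult r (hpow mult one r k) \<in> \<phi> T"
    proof -
      have e: "mult r (hpow mult one r k) = hpow mult one r m" using mk by simp
      have "mult r (hpow mult one r k) \<in> T" using e mT by simp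
      moreover have "\<not> (r \<in> T \<or> hpow mult one r k \<in> T)" using False kT by blast
      ultimately show ?thesis using P rR kR by blast
    qed
    have "mult r t \<in> \<phi> T" using key[OF K T J P JT rR False kR kT mJ t] .
    then show ?thesis unfolding KD(11)[OF K rR tR] .
  qed
qed

end
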